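(* Let $n \geq 2$ and suppose there exists a normalized symmetric conference matrix $C(n)$ of order $n$. Then for each $m \in \{n+1, n+2, n+3\}$, the complete graph $K_m$ has a good signing, i.e. there is an edge-signing $\sigma: E(K_m) \to \{-1,1\}$ such that every eigenvalue $\lambda$ of the signed adjacency matrix $A^{\sigma}$ satisfies $|\lambda| \leq 2\sqrt{m-2}$.
   Context: A conference matrix of order $n$ is an $n\times n$ matrix $C(n)$ with zero diagonal and off-diagonal entries in $\{1,-1\}$ such that $C(n)C(n)^T = (n-1)I$. It is normalized symmetric if it is symmetric and all entries of its first row are non-negative. For a graph $G$ and an edge-signing $\sigma: E(G)\to\{-1,1\}$, the signed adjacency matrix $A^{\sigma}=[a^\sigma_{ij}]$ has $a^{\sigma}_{ij}=\sigma(ij)$ if $ij\in E(G)$ and $0$ otherwise. For a $d$-regular graph $G$, a signing $\sigma$ is called a good signing if all eigenvalues of $A^{\sigma}$ have absolute value at most $2\sqrt{d-1}$; $K_m$ is $(m-1)$-regular. *)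

theory Defs
  imports "Jordan_Normal_Form.Char_Poly"
begin

definition conference_matrix :: "nat \<Rightarrow> real mat \<Rightarrow> bool" where
  "conference_matrix n C \<longleftrightarrow>
     C \<in> carrier_mat n n \<and>
     (\<forall>i<n. C $$ (i,i) = 0) \<and>
     (\<forall>i<n. \<forall>j<n. i \<noteq> j \<longrightarrow> C $$ (i,j) = 1 \<or> C $$ (i,j) = -1) \<and>
     C * transpose_mat C = of_nat (n - 1) \<cdot>\<^sub>m 1\<^sub>m n"

definition normalized_symmetric_conference_matrix :: "nat \<Rightarrow> real mat \<Rightarrow> bool" where
  "normalized_symmetric_conference_matrix n C \<longleftrightarrow>
     conference_matrix n C \<and> transpose_mat C = C \<and> (\<forall>j<n. C $$ (0,j) \<ge> 0)"

definition complete_graph_edges :: "nat \<Rightarrow> nat set set" where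
  "complete_graph_edges m = {{i,j} | i j. i < m \<and> j < m \<and> i \<noteq> j}"

definition edge_signing :: "nat set set \<Rightarrow> (nat set \<Rightarrow> real) \<Rightarrow> bool" where
  "edge_signing E \<sigma> \<longleftrightarrow> (\<forall>e\<in>E. \<sigma> e = 1 \<or> \<sigma> e = -1)"

definition signed_adjacency :: "nat \<Rightarrow> nat set set \<Rightarrow> (nat set \<Rightarrow> real) \<Rightarrow> real mat" where
  "signed_adjacency m E \<sigma> = mat m m (\<lambda>(i,j). if {i,j} \<in> E then \<sigma> {i,j} else 0)"

definition good_signing :: "nat \<Rightarrow> nat \<Rightarrow> nat set set \<Rightarrow> (nat set \<Rightarrow> real) \<Rightarrow> bool" where
  "good_signing m d E \<sigma> \<longleftrightarrow> edge_signing E \<sigma> \<and>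
     (\<forall>z::complex. eigenvalue (map_mat complex_of_real (signed_adjacency m E \<sigma>)) z
        \<longrightarrow> cmod z \<le> 2 * sqrt (real d - 1))"

end

theory Submission
  imports Defs
begin

lemma gersh_sq:
  fixes A :: "nat \<Rightarrow> nat \<Rightarrow> real"
  assumes ev: "eigenvalue (map_mat complex_of_real (mat m m (\<lambda>(i,j). A i j))) z"
  and rows: "\<And>i. i < m \<Longrightarrow> (\<Sum>j<m. \<bar>\<Sum>l<m. A i l * A l j\<bar>) \<le> R"
  shows "cmod z ^ 2 \<le> R"
proof -
  let ?M = "map_mat complex_of_real (mat m m (\<lambda>(i,j). A i j))"
  obtain v where v: "v \<in> carrier_vec m" "v \<noteq> 0\<^sub>v m" "?M *\<^sub>v v = z \<cdot>\<^sub>v v"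
    using ev unfolding eigenvalue_def eigenvector_def by auto
  define w where "w i = v $ i" for i
  have eq: "(\<Sum>l<m. complex_of_real (A i l) * w l) = z * w i" if "i < m" for i
  proof -
    have "(?M *\<^sub>v v) $ i = (z \<cdot>\<^sub>v v) $ i" using v(3) by simp
    then show ?thesis using that v(1)
      by (simp add: w_def scalar_prod_def row_def atLeast0LessThan)
  qed
  have "\<exists>i<m. w i \<noteq> 0"
  proof (rule ccontr)
    assume "\<not> ?thesis"
    then have "v = 0\<^sub>v m" using v(1) by (auto simp: w_def)
    with v(2) show False by simp
  qed
  then have mpos: "m > 0" by auto
  obtain i0 where i0: "i0 < m" "\<And>j. j < m \<Longrightarrow> cmod (w j) \<le> cmod (w i0)"
  proof -
    let ?S = "(\<lambda>j. cmod (w j)) ` {..<m}"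
    have fin: "finite ?S" "?S \<noteq> {}" using mpos by auto
    obtain i0 where "i0 < m" "cmod (w i0) = Max ?S" using Max_in[OF fin] by auto
    moreover have "\<And>j. j < m \<Longrightarrow> cmod (w j) \<le> Max ?S" using fin by (intro Max_ge) auto
    ultimately show ?thesis using that by auto
  qed
  have wpos: "cmod (w i0) > 0"
  proof -
    obtain i where "i < m" "w i \<noteq> 0" using \<open>\<exists>i<m. w i \<noteq> 0\<close> by auto
    then show ?thesis using i0(2)[of i] by auto
  qed
  have "z * z * w i0 = (\<Sum>l<m. complex_of_real (A i0 l) * (z * w l))"
    by (simp add: eq[OF i0(1), symmetric] sum_distrib_left mult_ac)
  also have "\<dots> = (\<Sum>l<m. complex_of_real (A i0 l) * (\<Sum>j<m. complex_of_real (A l j) * w j))"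
    by (intro sum.cong refl, simp add: eq)
  also have "\<dots> = (\<Sum>j<m. complex_of_real (\<Sum>l<m. A i0 l * A l j) * w j)"
  proof -
    have "(\<Sum>l<m. complex_of_real (A i0 l) * (\<Sum>j<m. complex_of_real (A l j) * w j))
        = (\<Sum>l<m. \<Sum>j<m. complex_of_real (A i0 l * A l j) * w j)"
      by (simp add: sum_distrib_left mult.assoc)
    also have "\<dots> = (\<Sum>j<m. \<Sum>l<m. complex_of_real (A i0 l * A l j) * w j)"
      by (rule sum.swap)
    also have "\<dots> = (\<Sum>j<m. complex_of_real (\<Sum>l<m. A i0 l * A l j) * w j)"
      by (simp only: sum_distrib_right of_real_sum)
    finally show ?thesis .
  qed
  finally have zz: "z * z * w i0 = (\<Sum>j<m. complex_of_real (\<Sum>l<m. A i0 l * A l j) * w j)" .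
  have "cmod z ^ 2 * cmod (w i0) = cmod (z * z * w i0)"
    by (simp add: norm_mult power2_eq_square)
  also have "\<dots> \<le> (\<Sum>j<m. \<bar>\<Sum>l<m. A i0 l * A l j\<bar> * cmod (w j))"
    unfolding zz by (rule order_trans[OF norm_sum]) (simp only: norm_mult norm_of_real order_refl)
  also have "\<dots> \<le> (\<Sum>j<m. \<bar>\<Sum>l<m. A i0 l * A l j\<bar> * cmod (w i0))"
    by (intro sum_mono mult_left_mono i0(2)) auto
  also have "\<dots> = (\<Sum>j<m. \<bar>\<Sum>l<m. A i0 l * A l j\<bar>) * cmod (w i0)"
    by (simp add: sum_distrib_right)
  also have "\<dots> \<le> R * cmod (w i0)"
    by (intro mult_right_mono rows i0(1)) auto
  finally show ?thesis using wpos by simp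
qed



lemma sum_split_nk: "(\<Sum>l<n+k. f l) = (\<Sum>l<n. f l) + (\<Sum>t<k. f (n+t))" for f :: "nat \<Rightarrow> real"
  by (induct k) (auto simp: add.assoc)

lemma sum_if_one: "i < k \<Longrightarrow> (\<Sum>u<k. if u = i then a else b) = a + (real k - 1) * (b::real)"
proof -
  assume "i < k"
  have "(\<Sum>u<k. if u = i then a else b) = (\<Sum>u<k. b + (if u = i then a - b else 0))"
    by (intro sum.cong) auto
  also have "\<dots> = real k * b + (a - b)" using \<open>i<k\<close> by (simp add: sum.distrib)
  finally show ?thesis by (simp add: algebra_simps)
qed

lemma odd_bound:
  fixes e :: "nat \<Rightarrow> real"
  assumes "k \<le> 3" "\<And>t. t < k \<Longrightarrow> e t = 1 \<or> e t = -1"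
  shows "\<bar>\<Sum>t<k. e t\<bar> \<le> ((\<Sum>t<k. e t)^2 + k) / (k+1)"
proof -
  have "k = 0 \<or> k = 1 \<or> k = 2 \<or> k = 3" using assms(1) by auto
  moreover have "e 0 = 1 \<or> e 0 = -1" if "k > 0" using assms(2) that by auto
  moreover have "e 1 = 1 \<or> e 1 = -1" if "k > 1" using assms(2) that by auto
  moreover have "e 2 = 1 \<or> e 2 = -1" if "k > 2" using assms(2) that by auto
  ultimately show ?thesis
    by (auto simp: numeral_3_eq_3 numeral_2_eq_2 lessThan_Suc field_simps power2_eq_square)
qed



locale confm =
  fixes n :: nat and C :: "nat \<Rightarrow> nat \<Rightarrow> real"
  assumes diag: "\<And>i. i < n \<Longrightarrow> C i i = 0"
  and pm: "\<And>i j. i < n \<Longrightarrow> j < n \<Longrightarrow> i \<noteq> j \<Longrightarrow> C i j = 1 \<or> C i j = -1"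
  and sym: "\<And>i j. i < n \<Longrightarrow> j < n \<Longrightarrow> C j i = C i j"
  and orth: "\<And>i j. i < n \<Longrightarrow> j < n \<Longrightarrow> (\<Sum>l<n. C i l * C l j) = (if i = j then real n - 1 else 0)"
begin

definition sg :: "nat \<Rightarrow> real" where "sg t = (if t = 1 then -1 else 1)"
definition bb :: "nat \<Rightarrow> nat \<Rightarrow> real" where "bb t i = C i t + (if i = t then sg t else 0)"
definition AA :: "nat \<Rightarrow> nat \<Rightarrow> real" where
  "AA a c = (if a < n then (if c < n then C a c else bb (c-n) a)
             else (if c < n then bb (a-n) c else - C (a-n) (c-n)))"

lemma sg_pm: "sg t = 1 \<or> sg t = -1" by (simp add: sg_def)
lemma sg_sq: "sg t * sg t = 1" by (simp add: sg_def)

lemma C_sq: "i < n \<Longrightarrow> j < n \<Longrightarrow> i \<noteq> j \<Longrightarrow> C i j * C i j = 1"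
  using pm by fastforce

lemma C_abs: "i < n \<Longrightarrow> j < n \<Longrightarrow> \<bar>C i j\<bar> \<le> 1"
  using pm[of i j] diag[of i] by (cases "i = j") auto

lemma bb_pm: "t < n \<Longrightarrow> i < n \<Longrightarrow> bb t i = 1 \<or> bb t i = -1"
  using pm[of i t] diag[of i] sg_pm[of t] by (auto simp: bb_def)

lemma bb_off: "i \<noteq> t \<Longrightarrow> bb t i = C i t" by (simp add: bb_def)

lemma AA_sym: "a < n + k \<Longrightarrow> c < n + k \<Longrightarrow> k \<le> n \<Longrightarrow> AA a c = AA c a"
  by (auto simp: AA_def sym)

definition sq :: "nat \<Rightarrow> nat \<Rightarrow> nat \<Rightarrow> real" where
  "sq k a c = (\<Sum>l<n+k. AA a l * AA l c)"

lemma sq_sym: "a < n + k \<Longrightarrow> c < n + k \<Longrightarrow> k \<le> n \<Longrightarrow> sq k a c = sq k c a"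
  unfolding sq_def by (intro sum.cong refl) (simp add: AA_sym mult.commute)

lemma P1: assumes "i < n" "j < n"
  shows "sq k i j = (if i = j then real n - 1 else 0) + (\<Sum>t<k. bb t i * bb t j)"
proof -
  have "sq k i j = (\<Sum>l<n. C i l * C l j) + (\<Sum>t<k. bb t i * bb t j)"
    unfolding sq_def sum_split_nk using assms by (simp add: AA_def)
  then show ?thesis using orth assms by simp
qed

lemma P2: assumes "i < n" "u < k" "k \<le> n"
  shows "sq k i (n+u) = (if i = u then real n - 1 else 0) + sg u * C i u - (\<Sum>t<k. bb t i * C t u)"
proof -
  have "sq k i (n+u) = (\<Sum>l<n. C i l * bb u l) + (\<Sum>t<k. bb t i * (- C t u))"
    unfolding sq_def sum_split_nk using assms by (simp add: AA_def)
  also have "(\<Sum>l<n. C i l * bb u l) = (\<Sum>l<n. C i l * C l u) + (\<Sum>l<n. if l = u then C i l * sg u else 0)"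
  proof -
    have "(\<Sum>l<n. C i l * bb u l) = (\<Sum>l<n. C i l * C l u + (if l = u then C i l * sg u else 0))"
      by (intro sum.cong refl) (simp add: bb_def algebra_simps)
    then show ?thesis by (simp add: sum.distrib)
  qed
  also have "\<dots> = (if i = u then real n - 1 else 0) + sg u * C i u"
    using assms orth[of i u] by simp
  finally show ?thesis by (simp add: sum_negf)
qed

lemma P3: assumes "u < k" "w < k" "k \<le> n"
  shows "sq k (n+u) (n+w) = (\<Sum>l<n. bb u l * bb w l) + (\<Sum>t<k. C u t * C t w)"
  unfolding sq_def sum_split_nk using assms by (simp add: AA_def)

lemma Gb: assumes "u < n" "w < n"
  shows "(\<Sum>l<n. bb u l * bb w l) = (if u = w then real n else (sg u + sg w) * C u w)"
proof -
  have "(\<Sum>l<n. bb u l * bb w l) = (\<Sum>l<n. C l u * C l w) + (\<Sum>l<n. if l = w then sg w * C l u else 0)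
     + (\<Sum>l<n. if l = u then sg u * C l w else 0) + (\<Sum>l<n. if l = u \<and> l = w then sg u * sg w else 0)"
  proof -
    have "(\<Sum>l<n. bb u l * bb w l) = (\<Sum>l<n. C l u * C l w + (if l = w then sg w * C l u else 0)
     + (if l = u then sg u * C l w else 0) + (if l = u \<and> l = w then sg u * sg w else 0))"
      by (intro sum.cong refl) (simp add: bb_def algebra_simps)
    then show ?thesis by (simp add: sum.distrib)
  qed
  also have "(\<Sum>l<n. C l u * C l w) = (\<Sum>l<n. C u l * C l w)"
    using assms by (intro sum.cong refl) (simp add: sym)
  also have "(\<Sum>l<n. if l = u \<and> l = w then sg u * sg w else 0) = (if u = w then sg u * sg w else 0)"
    using assms by (cases "u = w") (auto intro!: sum.neutral)
  finally show ?thesis using assms orth[of u w] diag sym[of u w] sg_sq[of u]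
    by (auto simp: algebra_simps)
qed

end


context confm begin

lemma lt3: "{..<3::nat} = {0,1,2}" by auto
lemma lt2: "{..<2::nat} = {0,1}" by auto
lemma lt1: "{..<1::nat} = {0}" by auto

lemma pm_mult: "(a::real) = 1 \<or> a = -1 \<Longrightarrow> b = 1 \<or> b = -1 \<Longrightarrow> a * b = 1 \<or> a * b = -1"
  by auto

lemma bb_sq: "t < n \<Longrightarrow> i < n \<Longrightarrow> bb t i * bb t i = 1"
  using bb_pm[of t i] by auto

lemma R1a: assumes "i < n" "k \<le> 3" "k \<le> n"
  shows "(\<Sum>c<n. \<bar>sq k i c\<bar>) \<le> real n - 1 + ((\<Sum>c<n. (\<Sum>t<k. bb t i * bb t c)^2) + real n * k) / (k+1)"
proof -
  let ?x = "\<lambda>c. \<Sum>t<k. bb t i * bb t c"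
  have "(\<Sum>c<n. \<bar>sq k i c\<bar>) \<le> (\<Sum>c<n. (if i = c then real n - 1 else 0) + \<bar>?x c\<bar>)"
    using assms by (intro sum_mono) (auto simp: P1 intro: order_trans[OF abs_triangle_ineq])
  also have "\<dots> = real n - 1 + (\<Sum>c<n. \<bar>?x c\<bar>)" using assms by (simp add: sum.distrib)
  also have "(\<Sum>c<n. \<bar>?x c\<bar>) \<le> (\<Sum>c<n. ((?x c)^2 + k) / (k+1))"
  proof (intro sum_mono)
    fix c assume "c \<in> {..<n}"
    then show "\<bar>?x c\<bar> \<le> ((?x c)^2 + k) / (k+1)"
    proof (intro odd_bound)
      fix t assume "t < k"
      then have "t < n" using assms by auto
      then show "bb t i * bb t c = 1 \<or> bb t i * bb t c = - 1"
        using \<open>c \<in> {..<n}\<close> assms by (intro pm_mult bb_pm) auto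
    qed (use assms in auto)
  qed
  also have "\<dots> = ((\<Sum>c<n. (?x c)^2) + real n * k) / (k+1)"
    by (simp add: sum_divide_distrib[symmetric] sum.distrib)
  finally show ?thesis by simp
qed

lemma R1b: "(\<Sum>c<n. (\<Sum>t<k. bb t i * bb t c)^2) = (\<Sum>t<k. \<Sum>u<k. bb t i * bb u i * (\<Sum>c<n. bb t c * bb u c))"
proof -
  have "(\<Sum>c<n. (\<Sum>t<k. bb t i * bb t c)^2) = (\<Sum>c<n. \<Sum>t<k. \<Sum>u<k. bb t i * bb u i * (bb t c * bb u c))"
    by (simp add: power2_eq_square sum_product mult_ac)
  also have "\<dots> = (\<Sum>t<k. \<Sum>c<n. \<Sum>u<k. bb t i * bb u i * (bb t c * bb u c))"
    by (rule sum.swap)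
  also have "\<dots> = (\<Sum>t<k. \<Sum>u<k. \<Sum>c<n. bb t i * bb u i * (bb t c * bb u c))"
    by (intro sum.cong refl sum.swap)
  also have "\<dots> = (\<Sum>t<k. \<Sum>u<k. bb t i * bb u i * (\<Sum>c<n. bb t c * bb u c))"
    by (simp add: sum_distrib_left)
  finally show ?thesis .
qed

lemma R1c: assumes "i < n" "1 \<le> k" "k \<le> 3" "k \<le> n"
  shows "(\<Sum>t<k. \<Sum>u<k. bb t i * bb u i * (\<Sum>c<n. bb t c * bb u c)) \<le> real k * n + (if k = 3 then 4 else 0)"
proof -
  have G: "(\<Sum>c<n. bb t c * bb u c) = (if t = u then real n else (sg t + sg u) * C t u)" if "t < k" "u < k" for t u
    using Gb that assms by auto
  have sq1: "bb t i * bb t i = 1" if "t < k" for t using bb_sq that assms by auto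
  have "k = 1 \<or> k = 2 \<or> k = 3" using assms by auto
  moreover {
    assume k: "k = 3"
    have "\<bar>bb 0 i * bb 2 i * C 0 2\<bar> \<le> 1"
      using bb_pm[of 0 i] bb_pm[of 2 i] C_abs[of 0 2] assms k by (auto simp: abs_mult)
    then have ?thesis using k sq1[of 0] sq1[of 1] sq1[of 2] sym[of 0 2] assms
      by (simp add: lt3 G sg_def algebra_simps abs_le_iff)
  } moreover {
    assume k: "k = 2"
    then have ?thesis using k sq1[of 0] sq1[of 1] assms
      by (simp add: lt2 G sg_def algebra_simps)
  } moreover {
    assume k: "k = 1"
    then have ?thesis using k sq1[of 0] assms
      by (simp add: lt1 G sg_def algebra_simps)
  }
  ultimately show ?thesis by blast
qed

lemma sum_offdiag: assumes "u < k" "k \<le> n"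
  shows "(\<Sum>t<k. if t = u then 0 else (1::real)) = real k - 1"
  using sum_if_one[OF assms(1), of 0 1] by simp

lemma R1d_term: assumes "i < n" "u < k" "k \<le> n"
  shows "\<bar>sq k i (n+u)\<bar> \<le> (if i = u then real n - k else k)"
proof (cases "i = u")
  case True
  have "(\<Sum>t<k. bb t i * C t u) = (\<Sum>t<k. if t = u then 0 else 1)"
  proof (intro sum.cong refl)
    fix t assume "t \<in> {..<k}"
    then have "t < n" using assms by auto
    then show "bb t i * C t u = (if t = u then 0 else 1)"
      using True assms diag[of u] C_sq[of u t] sym[of t u] by (auto simp: bb_off)
  qed
  then show ?thesis using True assms sum_offdiag[of u k] diag[of u] by (simp add: P2)
next
  case False
  have "\<bar>sq k i (n+u)\<bar> = \<bar>sg u * C i u - (\<Sum>t<k. bb t i * C t u)\<bar>"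
    using False assms by (simp add: P2)
  also have "\<dots> \<le> \<bar>sg u * C i u\<bar> + (\<Sum>t<k. \<bar>bb t i * C t u\<bar>)"
    by (rule order_trans[OF abs_triangle_ineq4]) (simp add: sum_abs)
  also have "\<dots> \<le> 1 + (\<Sum>t<k. if t = u then 0 else 1)"
  proof (intro add_mono sum_mono)
    show "\<bar>sg u * C i u\<bar> \<le> 1" using C_abs[of i u] assms sg_pm[of u]
      by (auto simp: abs_mult)
    fix t assume "t \<in> {..<k}"
    then have "t < n" using assms by auto
    then show "\<bar>bb t i * C t u\<bar> \<le> (if t = u then 0 else 1)"
      using assms diag[of u] C_abs[of t u] bb_pm[of t i] by (auto simp: abs_mult)
  qed
  finally show ?thesis using False sum_offdiag[of u k] assms by simp
qed

lemma R1d: assumes "i < n" "k \<le> n"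
  shows "(\<Sum>u<k. \<bar>sq k i (n+u)\<bar>) \<le> (if i < k then real n - k + (real k - 1) * k else real k * k)"
proof -
  have "(\<Sum>u<k. \<bar>sq k i (n+u)\<bar>) \<le> (\<Sum>u<k. if u = i then real n - k else k)"
  proof (intro sum_mono)
    fix u assume "u \<in> {..<k}"
    then show "\<bar>sq k i (n+u)\<bar> \<le> (if u = i then real n - k else k)"
      using R1d_term[OF assms(1), of u k] assms by (auto split: if_splits)
  qed
  also have "\<dots> = (if i < k then real n - k + (real k - 1) * k else real k * k)"
    using sum_if_one[of i k "real n - k" "real k"] by auto
  finally show ?thesis .
qed

lemma row_top: assumes "i < n" "1 \<le> k" "k \<le> 3" "k \<le> n" "2 \<le> n"
  shows "(\<Sum>c<n+k. \<bar>sq k i c\<bar>) \<le> 4 * (real n + k - 2)"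
proof -
  have "(\<Sum>c<n+k. \<bar>sq k i c\<bar>) = (\<Sum>c<n. \<bar>sq k i c\<bar>) + (\<Sum>u<k. \<bar>sq k i (n+u)\<bar>)"
    by (rule sum_split_nk)
  also have "\<dots> \<le> (real n - 1 + (real k * n + (if k = 3 then 4 else 0) + real n * k) / (k+1))
       + (if i < k then real n - k + (real k - 1) * k else real k * k)"
  proof (intro add_mono R1d)
    have "(\<Sum>c<n. \<bar>sq k i c\<bar>) \<le> real n - 1 + ((\<Sum>c<n. (\<Sum>t<k. bb t i * bb t c)^2) + real n * k) / (k+1)"
      using R1a assms by auto
    also have "\<dots> \<le> real n - 1 + (real k * n + (if k = 3 then 4 else 0) + real n * k) / (k+1)"
      unfolding R1b using R1c[OF assms(1-4)]
      by (intro add_left_mono divide_right_mono) auto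
    finally show "(\<Sum>c<n. \<bar>sq k i c\<bar>) \<le> \<dots>" .
  qed (use assms in auto)
  also have "\<dots> \<le> 4 * (real n + k - 2)"
  proof -
    have "k = 1 \<or> k = 2 \<or> k = 3" using assms by auto
    moreover have "i \<ge> 3 \<Longrightarrow> n \<ge> 4" using assms by auto
    ultimately show ?thesis using assms by (auto simp: field_simps)
  qed
  finally show ?thesis .
qed

definition al :: "nat \<Rightarrow> nat \<Rightarrow> real" where "al u t = (if t = u then sg u else - C t u)"

lemma al_pm: "t < n \<Longrightarrow> u < n \<Longrightarrow> al u t = 1 \<or> al u t = -1"
  using pm[of t u] sg_pm[of u] by (auto simp: al_def)

lemma R2_y: assumes "c < n" "k \<le> c" "u < k" "k \<le> n"
  shows "sq k c (n+u) = (\<Sum>t<k. C c t * al u t)"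
proof -
  have "(\<Sum>t<k. bb t c * C t u) = (\<Sum>t<k. if t = u then 0 else C c t * C t u)"
    using assms diag[of u] by (intro sum.cong refl) (auto simp: bb_off)
  moreover have "(\<Sum>t<k. C c t * al u t) = (\<Sum>t<k. (if t = u then C c u * sg u else 0) - (if t = u then 0 else C c t * C t u))"
    by (intro sum.cong refl) (auto simp: al_def)
  ultimately show ?thesis using assms by (simp add: P2 sum_subtractf)
qed

lemma R2_sumsq: assumes "u < k" "k \<le> n"
  shows "(\<Sum>c<n. (\<Sum>t<k. C c t * al u t)^2) = real k * (real n - 1)"
proof -
  have "(\<Sum>c<n. (\<Sum>t<k. C c t * al u t)^2) = (\<Sum>c<n. \<Sum>t<k. \<Sum>t'<k. al u t * al u t' * (C c t * C c t'))"
    by (simp add: power2_eq_square sum_product mult_ac)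
  also have "\<dots> = (\<Sum>t<k. \<Sum>c<n. \<Sum>t'<k. al u t * al u t' * (C c t * C c t'))"
    by (rule sum.swap)
  also have "\<dots> = (\<Sum>t<k. \<Sum>t'<k. \<Sum>c<n. al u t * al u t' * (C c t * C c t'))"
    by (intro sum.cong refl sum.swap)
  also have "\<dots> = (\<Sum>t<k. \<Sum>t'<k. al u t * al u t' * (\<Sum>c<n. C t c * C c t'))"
  proof (intro sum.cong refl)
    fix t t' assume "t \<in> {..<k}" "t' \<in> {..<k}"
    then have "t < n" using assms by auto
    then show "(\<Sum>c<n. al u t * al u t' * (C c t * C c t')) = al u t * al u t' * (\<Sum>c<n. C t c * C c t')"
      by (simp add: sum_distrib_left sym)
  qed
  also have "\<dots> = (\<Sum>t<k. \<Sum>t'<k. if t' = t then real n - 1 else 0)"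
  proof (intro sum.cong refl)
    fix t t' assume "t \<in> {..<k}" "t' \<in> {..<k}"
    then have "t < n" "t' < n" "u < n" using assms by auto
    then show "al u t * al u t' * (\<Sum>c<n. C t c * C c t') = (if t' = t then real n - 1 else 0)"
      using orth[of t t'] al_pm[of t u] by auto
  qed
  also have "\<dots> = real k * (real n - 1)" by simp
  finally show ?thesis .
qed

lemma R2_far: assumes "u < k" "k \<le> 3" "k \<le> n"
  shows "(\<Sum>c\<in>{k..<n}. \<bar>sq k c (n+u)\<bar>) \<le> (real k * (real n - 1) + (real n - k) * k) / (k+1)"
proof -
  let ?y = "\<lambda>c. \<Sum>t<k. C c t * al u t"
  have "(\<Sum>c\<in>{k..<n}. \<bar>sq k c (n+u)\<bar>) = (\<Sum>c\<in>{k..<n}. \<bar>?y c\<bar>)"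
    using assms by (intro sum.cong refl) (simp add: R2_y)
  also have "\<dots> \<le> (\<Sum>c\<in>{k..<n}. ((?y c)^2 + k) / (k+1))"
  proof (intro sum_mono)
    fix c assume c: "c \<in> {k..<n}"
    show "\<bar>?y c\<bar> \<le> ((?y c)^2 + k) / (k+1)"
    proof (intro odd_bound)
      fix t assume "t < k"
      then show "C c t * al u t = 1 \<or> C c t * al u t = - 1"
        using c assms by (intro pm_mult pm al_pm) auto
    qed (use assms in auto)
  qed
  also have "\<dots> = ((\<Sum>c\<in>{k..<n}. (?y c)^2) + (real n - k) * k) / (k+1)"
    using assms by (simp add: sum_divide_distrib[symmetric] sum.distrib of_nat_diff)
  also have "\<dots> \<le> ((\<Sum>c<n. (?y c)^2) + (real n - k) * k) / (k+1)"
    by (intro divide_right_mono add_right_mono sum_mono2) auto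
  also have "\<dots> = (real k * (real n - 1) + (real n - k) * k) / (k+1)"
    using R2_sumsq assms by simp
  finally show ?thesis .
qed



end

context confm begin
lemma R2_off: assumes "u < k" "1 \<le> k" "k \<le> 3" "k \<le> n"
  shows "(\<Sum>c<k. if c = u then 0 else \<bar>sg u * C c u - (\<Sum>t<k. bb t c * C t u)\<bar>)
    + (\<Sum>w<k. if w = u then 0 else \<bar>(sg u + sg w) * C u w + (\<Sum>t<k. C u t * C t w)\<bar>)
     \<le> 2 * (real k - 1)^2"
proof -
  have l3: "{..<3::nat} = {0,Suc 0,2}" and l2: "{..<2::nat} = {0,Suc 0}" by auto
  have d0: "C 0 0 = 0" using assms diag by auto
  have "k = 1 \<or> k = 2 \<or> k = 3" using assms by auto
  moreover {
    assume k: "k = 3"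
    have d: "C (Suc 0) (Suc 0) = 0" "C 2 2 = 0" and s: "C (Suc 0) 0 = C 0 (Suc 0)" "C 2 0 = C 0 2" "C 2 (Suc 0) = C (Suc 0) 2"
      using assms diag sym k by auto
    have p: "C 0 (Suc 0) = 1 \<or> C 0 (Suc 0) = -1" "C 0 2 = 1 \<or> C 0 2 = -1" "C (Suc 0) 2 = 1 \<or> C (Suc 0) 2 = -1"
      using assms pm k by auto
    have u: "u = 0 \<or> u = Suc 0 \<or> u = 2" using assms k by auto
    have ?thesis using u p
      by (elim disjE) (simp_all add: k l3 bb_def sg_def d0 d s)
  } moreover {
    assume k: "k = 2"
    have d: "C (Suc 0) (Suc 0) = 0" and s: "C (Suc 0) 0 = C 0 (Suc 0)"
      using assms diag sym k by auto
    have p: "C 0 (Suc 0) = 1 \<or> C 0 (Suc 0) = -1"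
      using assms pm k by auto
    have u: "u = 0 \<or> u = Suc 0" using assms k by auto
    have ?thesis using u p
      by (elim disjE) (simp_all add: k l2 bb_def sg_def d0 d s)
  } moreover {
    assume k: "k = 1"
    have ?thesis using k d0 assms
      by (simp add: lt1 bb_def sg_def)
  }
  ultimately show ?thesis by blast
qed

lemma pull_out: assumes "u \<in> A" "finite A"
  shows "(\<Sum>c\<in>A. g c) = g u + (\<Sum>c\<in>A. if c = u then 0 else (g c::real))"
proof -
  have "(\<Sum>c\<in>A. g c) = (\<Sum>c\<in>A. (if c = u then g c else 0) + (if c = u then 0 else g c))"
    by (intro sum.cong) auto
  also have "\<dots> = g u + (\<Sum>c\<in>A. if c = u then 0 else g c)"
    using assms by (simp add: sum.distrib)
  finally show ?thesis .
qed

lemma row_bot: assumes "u < k" "1 \<le> k" "k \<le> 3" "k \<le> n" "2 \<le> n"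
  shows "(\<Sum>c<n+k. \<bar>sq k (n+u) c\<bar>) \<le> 4 * (real n + k - 2)"
proof -
  have un: "u < n" using assms by auto
  have "(\<Sum>c<n+k. \<bar>sq k (n+u) c\<bar>) = (\<Sum>c<n. \<bar>sq k (n+u) c\<bar>) + (\<Sum>w<k. \<bar>sq k (n+u) (n+w)\<bar>)"
    by (rule sum_split_nk)
  also have "(\<Sum>c<n. \<bar>sq k (n+u) c\<bar>) = (\<Sum>c<n. \<bar>sq k c (n+u)\<bar>)"
    using assms by (intro sum.cong refl arg_cong[where f=abs] sq_sym) auto
  also have "\<dots> = (\<Sum>c<k. \<bar>sq k c (n+u)\<bar>) + (\<Sum>c\<in>{k..<n}. \<bar>sq k c (n+u)\<bar>)"
  proof -
    have e: "{..<n} = {..<k} \<union> {k..<n}" using assms by auto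
    show ?thesis unfolding e by (rule sum.union_disjoint) auto
  qed
  also have "(\<Sum>c<k. \<bar>sq k c (n+u)\<bar>) = \<bar>sq k u (n+u)\<bar> +
      (\<Sum>c<k. if c = u then 0 else \<bar>sg u * C c u - (\<Sum>t<k. bb t c * C t u)\<bar>)"
    using assms by (subst pull_out[of u]) (auto intro!: sum.cong simp: P2)
  also have "(\<Sum>w<k. \<bar>sq k (n+u) (n+w)\<bar>) = \<bar>sq k (n+u) (n+u)\<bar> +
      (\<Sum>w<k. if w = u then 0 else \<bar>(sg u + sg w) * C u w + (\<Sum>t<k. C u t * C t w)\<bar>)"
    using assms by (subst pull_out[of u]) (auto intro!: sum.cong simp: P3 Gb)
  also have "\<bar>sq k (n+u) (n+u)\<bar> = real n + k - 1"
  proof -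
    have "(\<Sum>t<k. C u t * C t u) = (\<Sum>t<k. if t = u then 0 else 1)"
    proof (intro sum.cong refl)
      fix t assume "t \<in> {..<k}"
      then have "t < n" using assms by auto
      then show "C u t * C t u = (if t = u then 0 else 1)"
        using un diag[of u] C_sq[of u t] sym[of u t] by auto
    qed
    then show ?thesis using assms un sum_offdiag[of u k] by (simp add: P3 Gb)
  qed
  finally have "(\<Sum>c<n+k. \<bar>sq k (n+u) c\<bar>) \<le> (real n - k) + (real n + k - 1) + 2 * (real k - 1)^2
      + (real k * (real n - 1) + (real n - k) * k) / (k+1)"
    using R1d_term[OF un assms(1) assms(4)] R2_off[OF assms(1-4)] R2_far[OF assms(1) assms(3) assms(4)]
    by simp
  also have "\<dots> \<le> 4 * (real n + k - 2)"
  proof -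
    have "k = 1 \<or> k = 2 \<or> k = 3" using assms by auto
    then show ?thesis using assms by (auto simp: field_simps power2_eq_square)
  qed
  finally show ?thesis .
qed

end


lemma cg_mem: assumes "i < m" "j < m"
  shows "{i,j} \<in> complete_graph_edges m \<longleftrightarrow> i \<noteq> j"
proof
  assume "{i,j} \<in> complete_graph_edges m"
  then obtain a b where "{i,j} = {a,b}" "a \<noteq> b" unfolding complete_graph_edges_def by auto
  then show "i \<noteq> j" by (metis doubleton_eq_iff)
next
  assume "i \<noteq> j" then show "{i,j} \<in> complete_graph_edges m"
    using assms unfolding complete_graph_edges_def by auto
qed

lemma good_from:
  fixes A :: "nat \<Rightarrow> nat \<Rightarrow> real"
  assumes symA: "\<And>i j. i < m \<Longrightarrow> j < m \<Longrightarrow> A j i = A i j"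
    and diagA: "\<And>i. i < m \<Longrightarrow> A i i = 0"
    and pmA: "\<And>i j. i < m \<Longrightarrow> j < m \<Longrightarrow> i \<noteq> j \<Longrightarrow> A i j = 1 \<or> A i j = -1"
    and rows: "\<And>i. i < m \<Longrightarrow> (\<Sum>j<m. \<bar>\<Sum>l<m. A i l * A l j\<bar>) \<le> 4 * (real m - 2)"
    and m2: "2 \<le> m"
  shows "\<exists>\<sigma>. good_signing m (m - 1) (complete_graph_edges m) \<sigma>"
proof -
  define \<sigma> where "\<sigma> e = A (Min e) (Max e)" for e :: "nat set"
  have sig: "\<sigma> {i,j} = A i j" if "i < m" "j < m" for i j
    using symA[OF that] that by (cases "i \<le> j") (auto simp: \<sigma>_def min_def max_def)
  have es: "edge_signing (complete_graph_edges m) \<sigma>"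
    unfolding edge_signing_def complete_graph_edges_def
  proof (intro ballI)
    fix e assume "e \<in> {{i, j} |i j. i < m \<and> j < m \<and> i \<noteq> j}"
    then obtain i j where "e = {i,j}" "i < m" "j < m" "i \<noteq> j" by auto
    then show "\<sigma> e = 1 \<or> \<sigma> e = - 1" using sig pmA[of i j] by simp
  qed
  have adj: "signed_adjacency m (complete_graph_edges m) \<sigma> = mat m m (\<lambda>(i,j). A i j)"
    unfolding signed_adjacency_def
    by (rule eq_matI) (auto simp: cg_mem sig diagA)
  have ev: "cmod z \<le> 2 * sqrt (real (m - 1) - 1)"
    if "eigenvalue (map_mat complex_of_real (signed_adjacency m (complete_graph_edges m) \<sigma>)) z" for z
  proof -
    have "cmod z ^ 2 \<le> 4 * (real m - 2)"
      using gersh_sq[where A=A and m=m and z=z] that rows unfolding adj by auto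
    then have "sqrt (cmod z ^ 2) \<le> sqrt (4 * (real m - 2))" by (rule real_sqrt_le_mono)
    moreover have "sqrt (4 * (real m - 2)) = sqrt 4 * sqrt (real m - 2)" by (rule real_sqrt_mult)
    moreover have "sqrt 4 = (2::real)" by (rule real_sqrt_unique) auto
    ultimately have "cmod z \<le> 2 * sqrt (real m - 2)" by simp
    then show ?thesis using m2 by (simp add: of_nat_diff)
  qed
  show ?thesis using es ev unfolding good_signing_def by blast
qed



definition A5 :: "nat \<Rightarrow> nat \<Rightarrow> real" where
  "A5 i j = (if i = j then 0 else if i + 1 = j \<or> j + 1 = i \<or> i + 4 = j \<or> j + 4 = i then 1 else -1)"

lemma lt5: "i < (5::nat) \<longleftrightarrow> i = 0 \<or> i = 1 \<or> i = 2 \<or> i = 3 \<or> i = 4" by auto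
lemma set5: "{..<5::nat} = {0,1,2,3,4}" by auto

lemma sum_if_one_nat: "i < k \<Longrightarrow> (\<Sum>u<k. if u = i then a else b) = a + (real k - 1) * (b::real)"
proof -
  assume "i < k"
  have "(\<Sum>u<k. if u = i then a else b) = (\<Sum>u<k. b + (if u = i then a - b else 0))"
    by (intro sum.cong) auto
  also have "\<dots> = real k * b + (a - b)" using \<open>i<k\<close> by (simp add: sum.distrib)
  finally show ?thesis by (simp add: algebra_simps)
qed

lemma sq5: assumes "i < 5" "j < 5" shows "(\<Sum>l<5. A5 i l * A5 l j) = (if i = j then 4 else -1)"
  using assms unfolding lt5 set5 by (elim disjE; simp add: A5_def)

lemma K5_good: "\<exists>\<sigma>. good_signing 5 (5 - 1) (complete_graph_edges 5) \<sigma>"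
proof (rule good_from[where A = A5])
  show "\<And>i j. i < 5 \<Longrightarrow> j < 5 \<Longrightarrow> A5 j i = A5 i j"
    by (auto simp: A5_def)
  show "\<And>i. i < 5 \<Longrightarrow> A5 i i = 0" by (simp add: A5_def)
  show "\<And>i j. i < 5 \<Longrightarrow> j < 5 \<Longrightarrow> i \<noteq> j \<Longrightarrow> A5 i j = 1 \<or> A5 i j = -1"
    by (simp add: A5_def)
  fix i :: nat assume i: "i < 5"
  have "(\<Sum>j<5. \<bar>\<Sum>l<5. A5 i l * A5 l j\<bar>) = (\<Sum>j<5. if j = i then 4 else 1)"
    using i by (intro sum.cong refl) (auto simp: sq5)
  also have "\<dots> = 8" using sum_if_one_nat[of i 5] i by simp
  finally show "(\<Sum>j<5. \<bar>\<Sum>l<5. A5 i l * A5 l j\<bar>) \<le> 4 * (real 5 - 2)" by simp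
qed simp



context confm begin

lemma AA_diag: "a < n + k \<Longrightarrow> k \<le> n \<Longrightarrow> AA a a = 0"
  using diag by (auto simp: AA_def)

lemma AA_pm: assumes "a < n + k" "c < n + k" "k \<le> n" "a \<noteq> c"
  shows "AA a c = 1 \<or> AA a c = -1"
proof -
  consider "a < n" "c < n" | "a < n" "\<not> c < n" | "\<not> a < n" "c < n" | "\<not> a < n" "\<not> c < n" by blast
  then show ?thesis
  proof cases
    case 1 then show ?thesis using pm assms by (simp add: AA_def)
  next
    case 2 then show ?thesis using bb_pm[of "c - n" a] assms by (simp add: AA_def)
  next
    case 3 then show ?thesis using bb_pm[of "a - n" c] assms by (simp add: AA_def)
  next
    case 4
    then have "a - n \<noteq> c - n" "a - n < n" "c - n < n" using assms by auto
    then show ?thesis using 4 pm[of "a - n" "c - n"] by (auto simp: AA_def)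
  qed
qed

lemma good_k: assumes "1 \<le> k" "k \<le> 3" "k \<le> n" "2 \<le> n"
  shows "\<exists>\<sigma>. good_signing (n+k) (n + k - 1) (complete_graph_edges (n+k)) \<sigma>"
proof (rule good_from[where A = AA])
  show "\<And>i j. i < n + k \<Longrightarrow> j < n + k \<Longrightarrow> AA j i = AA i j"
    using AA_sym assms by auto
  show "\<And>i. i < n + k \<Longrightarrow> AA i i = 0" using AA_diag assms by auto
  show "\<And>i j. i < n + k \<Longrightarrow> j < n + k \<Longrightarrow> i \<noteq> j \<Longrightarrow> AA i j = 1 \<or> AA i j = -1"
    using AA_pm assms by auto
  fix a assume a: "a < n + k"
  show "(\<Sum>j<n+k. \<bar>\<Sum>l<n+k. AA a l * AA l j\<bar>) \<le> 4 * (real (n + k) - 2)"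
  proof (cases "a < n")
    case True
    then show ?thesis using row_top[OF True assms] by (simp add: sq_def)
  next
    case False
    then obtain u where u: "a = n + u" "u < k" using a by (metis add_diff_inverse_nat nat_add_left_cancel_less)
    then show ?thesis using row_bot[OF u(2) assms] by (simp add: sq_def)
  qed
qed (use assms in auto)

end

lemma conf_locale:
  assumes "normalized_symmetric_conference_matrix n C" "n \<ge> 2"
  shows "confm n (\<lambda>i j. C $$ (i,j))"
proof -
  have cm: "C \<in> carrier_mat n n" "\<forall>i<n. C $$ (i,i) = 0"
    "\<forall>i<n. \<forall>j<n. i \<noteq> j \<longrightarrow> C $$ (i,j) = 1 \<or> C $$ (i,j) = -1"
    "C * transpose_mat C = of_nat (n - 1) \<cdot>\<^sub>m 1\<^sub>m n" and tr: "transpose_mat C = C"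
    using assms unfolding normalized_symmetric_conference_matrix_def conference_matrix_def by auto
  have sy: "C $$ (j,i) = C $$ (i,j)" if "i < n" "j < n" for i j
  proof -
    have "transpose_mat C $$ (i,j) = C $$ (j,i)" using cm(1) that by simp
    then show ?thesis using tr by simp
  qed
  show ?thesis
  proof
    fix i j assume ij: "i < n" "j < n"
    have "(C * C) $$ (i,j) = (of_nat (n - 1) \<cdot>\<^sub>m 1\<^sub>m n) $$ (i,j)" using cm(4) tr by simp
    moreover have "(C * C) $$ (i,j) = (\<Sum>l<n. C $$ (i,l) * C $$ (l,j))"
      using cm(1) ij by (simp add: scalar_prod_def atLeast0LessThan)
    moreover have "(of_nat (n - 1) \<cdot>\<^sub>m 1\<^sub>m n) $$ (i,j) = (if i = j then real n - 1 else (0::real))"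
      using ij assms(2) by (simp add: of_nat_diff)
    ultimately show "(\<Sum>l<n. C $$ (i,l) * C $$ (l,j)) = (if i = j then real n - 1 else 0)" by simp
  qed (use cm sy in auto)
qed

theorem mainTheorem1:
  fixes n :: nat and C :: "real mat"
  assumes "n \<ge> 2"
    and "normalized_symmetric_conference_matrix n C"
  shows "\<forall>m \<in> {n+1, n+2, n+3}. \<exists>\<sigma>. good_signing m (m - 1) (complete_graph_edges m) \<sigma>"
proof -
  interpret confm n "\<lambda>i j. C $$ (i,j)" using conf_locale assms by blast
  have "\<exists>\<sigma>. good_signing (n+k) (n + k - 1) (complete_graph_edges (n+k)) \<sigma>"
    if "1 \<le> k" "k \<le> 3" for k
  proof (cases "k \<le> n")
    case True then show ?thesis using good_k that assms by auto
  next
    case False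
    then have "n = 2" "k = 3" using that assms by auto
    then show ?thesis using K5_good by simp
  qed
  from this[of 1] this[of 2] this[of 3] show ?thesis by auto
qed


end
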